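(* Let $1\le m<n$, $\boldsymbol\xi=(\xi_1,\dots,\xi_{n-1})\in\mathbb Z_{\ge0}^{n-1}$ and $x,\Lambda_1,\dots,\Lambda_n\in\mathbb C$. (i) For any partition $\boldsymbol I=(I_{m+1},\dots,I_n)$ of $\{1,\dots,\xi_m\}$ with $\eta_s:=\eta_s(\boldsymbol I)\le\xi_s$ for $s=m+1,\dots,n-1$, and $\boldsymbol\eta=(\eta_{m+1},\dots,\eta_{n-1})$, $$\mathrm{Sym}_{\ddot{\boldsymbol t}}\Big[U_{\boldsymbol I}\big(\ddot{\boldsymbol t}_{[\boldsymbol\eta]};\boldsymbol t^m\big)L_{\boldsymbol\eta,\ddot{\boldsymbol\xi}}(\ddot{\boldsymbol t})\Big]=\prod_{s=m+1}^{n-1}\frac{1}{\eta_s!}\ \mathrm{Sym}_{\ddot{\boldsymbol t}}\Big[W_{\boldsymbol I}\big(\ddot{\boldsymbol t}_{[\boldsymbol\eta]};\boldsymbol t^m\big)L_{\boldsymbol\eta,\ddot{\boldsymbol\xi}}(\ddot{\boldsymbol t})\Big].$$ (ii) For any partition $\boldsymbol J=(J_1,\dots,J_m)$ of $\{1,\dots,\xi_m\}$ with $\zeta_s:=\zeta_s(\boldsymbol J)\le\xi_s$ for $s=1,\dots,m-1$, and $\boldsymbol\zeta=(\zeta_1,\dots,\zeta_{m-1})$, $$\mathrm{Sym}_{\dot{\boldsymbol t}}\Big[\widetilde U_{\boldsymbol J}\big(\dot{\boldsymbol t}_{(\dot{\boldsymbol\xi}-\boldsymbol\zeta,\dot{\boldsymbol\xi}]};\check{\boldsymbol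 t}^m\big)\widetilde L_{\boldsymbol\zeta,\dot{\boldsymbol\xi}}(\dot{\boldsymbol t})\Big]=\prod_{s=1}^{m-1}\frac{1}{\zeta_s!}\ \mathrm{Sym}_{\dot{\boldsymbol t}}\Big[\widetilde W_{\boldsymbol J}\big(\dot{\boldsymbol t}_{(\dot{\boldsymbol\xi}-\boldsymbol\zeta,\dot{\boldsymbol\xi}]};\check{\boldsymbol t}^m\big)\widetilde L_{\boldsymbol\zeta,\dot{\boldsymbol\xi}}(\dot{\boldsymbol t})\Big],$$ where $\check{\boldsymbol t}^m=(t^m_{\xi_m},\dots,t^m_1)$.
   Context: Notation. $E_{ab}$ denotes a matrix unit; entries of an operator $X$ on $(\mathbb{C}^k)^{\otimes r}$ are written $X^{a_1\dots a_r}_{b_1\dots b_r}$ (upper = row, lower = column). $A^{(i)}$ is $A$ acting in the $i$-th tensor factor; $(A\otimes B)^{(ij)}=A^{(i)}B^{(j)}$. $\prod^{\rightarrow}_{1\le i\le k}X_i=X_1\cdots X_k$, $\prod^{\leftarrow}_{1\le i\le k}X_i=X_k\cdots X_1$. $R^{\langle k\rangle}(u)=1+u^{-1}\sum_{a,b=1}^kE_{ab}\otimes E_{ba}$. $\mathrm{Sym}_{y_1,\dots,y_k}f=\sum_{\sigma\in S_k}f(y_{\sigma(1)},\dots,y_{\sigma(k)})$. Yangian. $Y(\mathfrak{gl}_k)$ is generated by $(T^a_b)^{\{s\}}$, $a,b\le k$, $s\ge1$, with $T^a_b(u)=\delta_{ab}+\sum_{s\ge1}(T^a_b)^{\{s\}}u^{-s}$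 and relations $(u-v)[T^a_b(u),T^c_d(v)]=T^a_d(u)T^c_b(v)-T^a_d(v)T^c_b(u)$; $T(u)=\sum E_{ab}\otimes T^a_b(u)$. Embeddings $\phi_m:Y(\mathfrak{gl}_m)\to Y(\mathfrak{gl}_n)$, $T^a_b(u)\mapsto T^a_b(u)$, and $\psi_{n-m}:Y(\mathfrak{gl}_{n-m})\to Y(\mathfrak{gl}_n)$, $T^a_b(u)\mapsto T^{a+m}_{b+m}(u)$. Bethe vectors. For $k\ge2$, $\boldsymbol\xi=(\xi_1,\dots,\xi_{k-1})\in\mathbb Z_{\ge0}^{k-1}$, $\xi^a=\xi_1+\dots+\xi_a$ ($\xi^0=0$), variables $\boldsymbol t^a=(t^a_1,\dots,t^a_{\xi_a})$, in $\mathrm{End}((\mathbb C^k)^{\otimes\xi^{k-1}})\otimes Y(\mathfrak{gl}_k)$ set $\mathbb T^{[j]}(\boldsymbol t^j)=\prod^{\rightarrow}_{1\le i\le\xi_j}T^{(\xi^{j-1}+i)}(t^j_i)$, $\mathbb R^{[i,j]}(\boldsymbol t^i,\boldsymbol t^j)=\prod^{\rightarrow}_{1\le p\le\xi_i}\prod^{\leftarrow}_{1\le l\le\xi_j}R^{(\xi^{i-1}+p,\,\xi^{j-1}+l)}(t^i_p-t^j_l)$, $\widehat{\mathbb T}_{\boldsymbol\xi}(\boldsymbol t)=\mathbb T^{[1]}\cdots\mathbb T^{[k-1]}\prod^{\leftarrow}_{1\le i\le k-1}\prod^{\leftarrow}_{1\le j<i}\mathbb R^{[i,j]}(\boldsymbol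 t^i,\boldsymbol t^j)$; $\mathbb B^{\langle k\rangle}_{\boldsymbol\xi}(\boldsymbol t)$ is its entry with upper indices ($a$ repeated $\xi_a$ times, $a=1,\dots,k-1$) and lower indices ($a+1$ repeated $\xi_a$ times); $\mathbb B^{\langle1\rangle}=1$. $\dot{\boldsymbol\xi}=(\xi_1,\dots,\xi_{m-1})$, $\ddot{\boldsymbol\xi}=(\xi_{m+1},\dots,\xi_{n-1})$, $\dot{\boldsymbol t}=(\boldsymbol t^1,\dots,\boldsymbol t^{m-1})$, $\ddot{\boldsymbol t}=(\boldsymbol t^{m+1},\dots,\boldsymbol t^{n-1})$, $\boldsymbol t^m=(t^m_1,\dots,t^m_{\xi_m})$; $\mathrm{Sym}_{\dot{\boldsymbol t}}$ ($\mathrm{Sym}_{\ddot{\boldsymbol t}}$) is the composition of $\mathrm{Sym}_{\boldsymbol t^a}$ over $a=1,\dots,m-1$ (over $a=m+1,\dots,n-1$). Weight functions. For a partition $\boldsymbol I=(I_{m+1},\dots,I_n)$ of $\{1,\dots,M\}$, $\eta_l(\boldsymbol I)=|\bigcup_{k=l+1}^nI_k|$ and $i^{(l)}_1<\dots<i^{(l)}_{\eta_l(\boldsymbol I)}$ are the elements of $\bigcup_{k=l+1}^nI_k$ ($l=m,\dots,n-1$); for variables $\boldsymbol v^l=(v^l_1,\dots,v^l_{\eta_l(\boldsymbol I)})$, $U_{\boldsymbol I}(\boldsymbol v^{m+1},\dots,\boldsymbol v^{n-1};\boldsymbol v^m)=\prod_{l=m+1}^{n-1}\prod_{a=1}^{\eta_l}\Big(\prod_{c:\,i^{(l-1)}_c=i^{(l)}_a}\frac{1}{v^l_a-v^{l-1}_c}\prod_{d:\,i^{(l-1)}_d>i^{(l)}_a}\frac{v^l_a-v^{l-1}_d+1}{v^l_a-v^{l-1}_d}\prod_{b=a+1}^{\eta_l}\frac{v^l_b-v^l_a+1}{v^l_b-v^l_a}\Big)$,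 and $W_{\boldsymbol I}=\mathrm{Sym}_{\boldsymbol v^{m+1}}\cdots\mathrm{Sym}_{\boldsymbol v^{n-1}}U_{\boldsymbol I}$. For a partition $\boldsymbol J=(J_1,\dots,J_m)$ of $\{1,\dots,M\}$, $\zeta_l(\boldsymbol J)=|\bigcup_{k=1}^lJ_k|$ and $j^{(l)}_1<\dots<j^{(l)}_{\zeta_l(\boldsymbol J)}$ are the elements of $\bigcup_{k=1}^lJ_k$ ($l=1,\dots,m$); for $\boldsymbol u^l=(u^l_1,\dots,u^l_{\zeta_l(\boldsymbol J)})$, $\widetilde U_{\boldsymbol J}(\boldsymbol u^1,\dots,\boldsymbol u^{m-1};\boldsymbol u^m)=\prod_{l=2}^{m}\prod_{a=1}^{\zeta_l}\Big(\prod_{c:\,j^{(l-1)}_c<j^{(l)}_a}\frac{u^l_a-u^{l-1}_c+1}{u^l_a-u^{l-1}_c}\prod_{d:\,j^{(l-1)}_d=j^{(l)}_a}\frac{1}{u^l_a-u^{l-1}_d}\prod_{b=a+1}^{\zeta_l}\frac{u^l_a-u^l_b+1}{u^l_a-u^l_b}\Big)$, and $\widetilde W_{\boldsymbol J}=\mathrm{Sym}_{\boldsymbol u^1}\cdots\mathrm{Sym}_{\boldsymbol u^{m-1}}\widetilde U_{\boldsymbol J}$. Arguments: $(\ddot{\boldsymbol t}_{[\boldsymbol\eta]};\boldsymbol t^m)$ means $\boldsymbol v^l=(t^l_1,\dots,t^l_{\eta_l})$ ($l>m$), $\boldsymbol v^m=\boldsymbol t^m$; $(\dot{\boldsymbol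 t}_{(\dot{\boldsymbol\xi}-\boldsymbol\zeta,\dot{\boldsymbol\xi}]};\check{\boldsymbol t}^m)$ means $\boldsymbol u^l=(t^l_{\xi_l-\zeta_l+1},\dots,t^l_{\xi_l})$ ($l<m$), $\boldsymbol u^m=\check{\boldsymbol t}^m$. Functions $L,\widetilde L$ ($Y(\mathfrak{gl}_n)$-valued). With $\ddot{\boldsymbol t}_{(\boldsymbol\eta,\ddot{\boldsymbol\xi}]}$ the groups $(t^b_{\eta_b+1},\dots,t^b_{\xi_b})$, $b=m+1,\dots,n-1$, and $\dot{\boldsymbol t}_{[\dot{\boldsymbol\xi}-\boldsymbol\zeta]}$ the groups $(t^a_1,\dots,t^a_{\xi_a-\zeta_a})$, $a=1,\dots,m-1$: $L_{\boldsymbol\eta,\ddot{\boldsymbol\xi}}(\ddot{\boldsymbol t})=\prod_{a=m+1}^{n-2}\prod_{i=1}^{\eta_{a+1}}\prod_{j=\eta_a+1}^{\xi_a}\frac{t^{a+1}_i-t^a_j+1}{t^{a+1}_i-t^a_j}\prod_{l=m+1}^{n-1}\prod_{i=1}^{\eta_l}\frac{t^l_i-x+\Lambda_l}{t^l_i-x}\ \psi_{n-m}\big(\mathbb B^{\langle n-m\rangle}_{\ddot{\boldsymbol\xi}-\boldsymbol\eta}(\ddot{\boldsymbol t}_{(\boldsymbol\eta,\ddot{\boldsymbol\xi}]})\big)$, $\widetilde L_{\boldsymbol\zeta,\dot{\boldsymbol\xi}}(\dot{\boldsymbol t})=\prod_{a=1}^{m-2}\prod_{i=1}^{\xi_{a+1}-\zeta_{a+1}}\prod_{j=\xi_a-\zeta_a+1}^{\xi_a}\frac{t^{a+1}_i-t^a_j+1}{t^{a+1}_i-t^a_j}\prod_{l=1}^{m-1}\prod_{i=0}^{\zeta_l-1}\frac{t^l_{\xi_l-i}-x+\Lambda_{l+1}}{t^l_{\xi_l-i}-x}\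 \phi_m\big(\mathbb B^{\langle m\rangle}_{\dot{\boldsymbol\xi}-\boldsymbol\zeta}(\dot{\boldsymbol t}_{[\dot{\boldsymbol\xi}-\boldsymbol\zeta]})\big)$. *)

theory Defs
  imports Complex_Main "HOL-Combinatorics.Permutations"
begin

section \<open>Scalars: a unital associative C-algebra, presented by a central embedding of C\<close>

definition alg_emb :: "(complex \<Rightarrow> 'a::ring_1) \<Rightarrow> bool" where
  "alg_emb emb \<longleftrightarrow> (\<forall>x y. emb (x + y) = emb x + emb y) \<and> (\<forall>x y. emb (x * y) = emb x * emb y)
     \<and> emb 1 = 1 \<and> (\<forall>c z. emb c * z = z * emb c)"

definition yangian_rel :: "(complex \<Rightarrow> 'a::ring_1) \<Rightarrow> nat \<Rightarrow> (nat \<Rightarrow> nat \<Rightarrow> complex \<Rightarrow> 'a) \<Rightarrow> bool" where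
  "yangian_rel emb k T \<longleftrightarrow> (\<forall>a\<in>{1..k}. \<forall>b\<in>{1..k}. \<forall>c\<in>{1..k}. \<forall>d\<in>{1..k}. \<forall>u v.
      emb (u - v) * (T a b u * T c d v - T c d v * T a b u) = T a d u * T c b v - T a d v * T c b u)"

section \<open>Operators on (C^k)^{tensor r} with algebra-valued entries\<close>

text \<open>Multi-indices: lists of length r with entries in {1..k}; tensor factor i (1-based)
  is list position i-1. An operator is given by its entries X upper lower.\<close>
definition idx :: "nat \<Rightarrow> nat \<Rightarrow> nat list set" where
  "idx k r = {xs. length xs = r \<and> set xs \<subseteq> {1..k}}"

definition opmul :: "nat \<Rightarrow> nat \<Rightarrow> (nat list \<Rightarrow> nat list \<Rightarrow> 'a::ring_1) \<Rightarrow> (nat list \<Rightarrow> nat list \<Rightarrow> 'a) \<Rightarrow> nat list \<Rightarrow> nat list \<Rightarrow> 'a" where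
  "opmul k r X Y = (\<lambda>a b. \<Sum>c\<in>idx k r. X a c * Y c b)"

definition opone :: "nat list \<Rightarrow> nat list \<Rightarrow> 'a::ring_1" where
  "opone = (\<lambda>a b. if a = b then 1 else 0)"

definition opprod :: "nat \<Rightarrow> nat \<Rightarrow> (nat list \<Rightarrow> nat list \<Rightarrow> 'a::ring_1) list \<Rightarrow> nat list \<Rightarrow> nat list \<Rightarrow> 'a" where
  "opprod k r Xs = foldr (opmul k r) Xs opone"

text \<open>T^{(i)}(u) = sum E_ab^{(i)} (x) T^a_b(u).\<close>
definition Tfac :: "(nat \<Rightarrow> nat \<Rightarrow> complex \<Rightarrow> 'a::ring_1) \<Rightarrow> nat \<Rightarrow> nat \<Rightarrow> complex \<Rightarrow> nat list \<Rightarrow> nat list \<Rightarrow> 'a" where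
  "Tfac T r i u = (\<lambda>a b. if (\<forall>j<r. j \<noteq> i - 1 \<longrightarrow> a ! j = b ! j) then T (a ! (i - 1)) (b ! (i - 1)) u else 0)"

text \<open>R^{(i,j)}(u) = 1 + u^{-1} sum E_ab^{(i)} E_ba^{(j)} (i \<noteq> j).\<close>
definition Rfac :: "(complex \<Rightarrow> 'a::ring_1) \<Rightarrow> nat \<Rightarrow> nat \<Rightarrow> nat \<Rightarrow> complex \<Rightarrow> nat list \<Rightarrow> nat list \<Rightarrow> 'a" where
  "Rfac emb r i j u = (\<lambda>a b. emb ((if a = b then 1 else 0) +
      (if a ! (i - 1) = b ! (j - 1) \<and> a ! (j - 1) = b ! (i - 1) \<and>
          (\<forall>l<r. l \<noteq> i - 1 \<longrightarrow> l \<noteq> j - 1 \<longrightarrow> a ! l = b ! l) then 1 / u else 0)))"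

definition cum :: "(nat \<Rightarrow> nat) \<Rightarrow> nat \<Rightarrow> nat" where
  "cum \<xi> a = (\<Sum>j=1..a. \<xi> j)"

definition TTgrp :: "(nat \<Rightarrow> nat \<Rightarrow> complex \<Rightarrow> 'a::ring_1) \<Rightarrow> nat \<Rightarrow> (nat \<Rightarrow> nat) \<Rightarrow> (nat \<Rightarrow> nat \<Rightarrow> complex) \<Rightarrow> nat \<Rightarrow> nat list \<Rightarrow> nat list \<Rightarrow> 'a" where
  "TTgrp T k \<xi> t j = opprod k (cum \<xi> (k - 1))
     [Tfac T (cum \<xi> (k - 1)) (cum \<xi> (j - 1) + i) (t j i). i \<leftarrow> [1..<\<xi> j + 1]]"

definition RRgrp :: "(complex \<Rightarrow> 'a::ring_1) \<Rightarrow> nat \<Rightarrow> (nat \<Rightarrow> nat) \<Rightarrow> (nat \<Rightarrow> nat \<Rightarrow> complex) \<Rightarrow> nat \<Rightarrow> nat \<Rightarrow> nat list \<Rightarrow> nat list \<Rightarrow> 'a" where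
  "RRgrp emb k \<xi> t i j = opprod k (cum \<xi> (k - 1))
     [Rfac emb (cum \<xi> (k - 1)) (cum \<xi> (i - 1) + p) (cum \<xi> (j - 1) + l) (t i p - t j l).
        p \<leftarrow> [1..<\<xi> i + 1], l \<leftarrow> rev [1..<\<xi> j + 1]]"

definition That :: "(complex \<Rightarrow> 'a::ring_1) \<Rightarrow> (nat \<Rightarrow> nat \<Rightarrow> complex \<Rightarrow> 'a) \<Rightarrow> nat \<Rightarrow> (nat \<Rightarrow> nat) \<Rightarrow> (nat \<Rightarrow> nat \<Rightarrow> complex) \<Rightarrow> nat list \<Rightarrow> nat list \<Rightarrow> 'a" where
  "That emb T k \<xi> t = opprod k (cum \<xi> (k - 1))
     ([TTgrp T k \<xi> t j. j \<leftarrow> [1..<k]] @ [RRgrp emb k \<xi> t i j. i \<leftarrow> rev [1..<k], j \<leftarrow> rev [1..<i]])"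

text \<open>B^{<k>}_xi(t): entry of hat T with upper indices (1^xi_1,...,(k-1)^xi_{k-1}) and lower
  indices (2^xi_1,...,k^xi_{k-1}); t j i = t^j_i. For k = 1 this is 1.\<close>
definition Bethe :: "(complex \<Rightarrow> 'a::ring_1) \<Rightarrow> (nat \<Rightarrow> nat \<Rightarrow> complex \<Rightarrow> 'a) \<Rightarrow> nat \<Rightarrow> (nat \<Rightarrow> nat) \<Rightarrow> (nat \<Rightarrow> nat \<Rightarrow> complex) \<Rightarrow> 'a" where
  "Bethe emb T k \<xi> t = (if k \<le> 1 then 1 else
     That emb T k \<xi> t (concat [replicate (\<xi> a) a. a \<leftarrow> [1..<k]])
                      (concat [replicate (\<xi> a) (a + 1). a \<leftarrow> [1..<k]]))"

text \<open>Sym over the groups of variables t^a (a in G), the group t^a having sz a variables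
  t a 1, ..., t a (sz a).\<close>
definition perm_fams :: "nat set \<Rightarrow> (nat \<Rightarrow> nat) \<Rightarrow> (nat \<Rightarrow> nat \<Rightarrow> nat) set" where
  "perm_fams G sz = {\<sigma>. \<forall>a. (a \<in> G \<longrightarrow> \<sigma> a permutes {1..sz a}) \<and> (a \<notin> G \<longrightarrow> \<sigma> a = id)}"

definition SymG :: "nat set \<Rightarrow> (nat \<Rightarrow> nat) \<Rightarrow> ((nat \<Rightarrow> nat \<Rightarrow> complex) \<Rightarrow> 'b::comm_monoid_add) \<Rightarrow> (nat \<Rightarrow> nat \<Rightarrow> complex) \<Rightarrow> 'b" where
  "SymG G sz F t = (\<Sum>\<sigma>\<in>perm_fams G sz. F (\<lambda>a i. t a (\<sigma> a i)))"

definition is_partition :: "nat set \<Rightarrow> (nat \<Rightarrow> nat set) \<Rightarrow> nat \<Rightarrow> bool" where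
  "is_partition K P M \<longleftrightarrow> (\<Union>k\<in>K. P k) = {1..M} \<and> (\<forall>k\<in>K. \<forall>l\<in>K. k \<noteq> l \<longrightarrow> P k \<inter> P l = {})"

definition etaI :: "nat \<Rightarrow> (nat \<Rightarrow> nat set) \<Rightarrow> nat \<Rightarrow> nat" where
  "etaI n I l = card (\<Union>k\<in>{l+1..n}. I k)"

definition elI :: "nat \<Rightarrow> (nat \<Rightarrow> nat set) \<Rightarrow> nat \<Rightarrow> nat \<Rightarrow> nat" where
  "elI n I l c = sorted_list_of_set (\<Union>k\<in>{l+1..n}. I k) ! (c - 1)"

definition UI :: "nat \<Rightarrow> nat \<Rightarrow> (nat \<Rightarrow> nat set) \<Rightarrow> (nat \<Rightarrow> nat \<Rightarrow> complex) \<Rightarrow> complex" where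
  "UI n m I v = (\<Prod>l\<in>{m+1..n-1}. \<Prod>a\<in>{1..etaI n I l}.
      (\<Prod>c\<in>{c\<in>{1..etaI n I (l-1)}. elI n I (l-1) c = elI n I l a}. 1 / (v l a - v (l-1) c)) *
      (\<Prod>d\<in>{d\<in>{1..etaI n I (l-1)}. elI n I (l-1) d > elI n I l a}.
          (v l a - v (l-1) d + 1) / (v l a - v (l-1) d)) *
      (\<Prod>b\<in>{a+1..etaI n I l}. (v l b - v l a + 1) / (v l b - v l a)))"

definition WI :: "nat \<Rightarrow> nat \<Rightarrow> (nat \<Rightarrow> nat set) \<Rightarrow> (nat \<Rightarrow> nat \<Rightarrow> complex) \<Rightarrow> complex" where
  "WI n m I v = SymG {m+1..n-1} (etaI n I) (UI n m I) v"

definition zetaJ :: "(nat \<Rightarrow> nat set) \<Rightarrow> nat \<Rightarrow> nat" where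
  "zetaJ J l = card (\<Union>k\<in>{1..l}. J k)"

definition elJ :: "(nat \<Rightarrow> nat set) \<Rightarrow> nat \<Rightarrow> nat \<Rightarrow> nat" where
  "elJ J l c = sorted_list_of_set (\<Union>k\<in>{1..l}. J k) ! (c - 1)"

definition UJ :: "nat \<Rightarrow> (nat \<Rightarrow> nat set) \<Rightarrow> (nat \<Rightarrow> nat \<Rightarrow> complex) \<Rightarrow> complex" where
  "UJ m J u = (\<Prod>l\<in>{2..m}. \<Prod>a\<in>{1..zetaJ J l}.
      (\<Prod>c\<in>{c\<in>{1..zetaJ J (l-1)}. elJ J (l-1) c < elJ J l a}.
          (u l a - u (l-1) c + 1) / (u l a - u (l-1) c)) *
      (\<Prod>d\<in>{d\<in>{1..zetaJ J (l-1)}. elJ J (l-1) d = elJ J l a}. 1 / (u l a - u (l-1) d)) *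
      (\<Prod>b\<in>{a+1..zetaJ J l}. (u l a - u l b + 1) / (u l a - u l b)))"

definition WJ :: "nat \<Rightarrow> (nat \<Rightarrow> nat set) \<Rightarrow> (nat \<Rightarrow> nat \<Rightarrow> complex) \<Rightarrow> complex" where
  "WJ m J u = SymG {1..m-1} (zetaJ J) (UJ m J) u"

definition Lfun :: "(complex \<Rightarrow> 'a::ring_1) \<Rightarrow> (nat \<Rightarrow> nat \<Rightarrow> complex \<Rightarrow> 'a) \<Rightarrow> nat \<Rightarrow> nat \<Rightarrow> complex \<Rightarrow> (nat \<Rightarrow> complex)
     \<Rightarrow> (nat \<Rightarrow> nat) \<Rightarrow> (nat \<Rightarrow> nat) \<Rightarrow> (nat \<Rightarrow> nat \<Rightarrow> complex) \<Rightarrow> 'a" where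
  "Lfun emb T n m x \<Lambda> \<xi> \<eta> t =
     emb ((\<Prod>a\<in>{m+1..n-2}. \<Prod>i\<in>{1..\<eta> (a+1)}. \<Prod>j\<in>{\<eta> a + 1..\<xi> a}.
             (t (a+1) i - t a j + 1) / (t (a+1) i - t a j)) *
          (\<Prod>l\<in>{m+1..n-1}. \<Prod>i\<in>{1..\<eta> l}. (t l i - x + \<Lambda> l) / (t l i - x)))
     * Bethe emb (\<lambda>a b. T (a + m) (b + m)) (n - m) (\<lambda>a. \<xi> (a + m) - \<eta> (a + m))
             (\<lambda>a i. t (a + m) (\<eta> (a + m) + i))"

definition Ltil :: "(complex \<Rightarrow> 'a::ring_1) \<Rightarrow> (nat \<Rightarrow> nat \<Rightarrow> complex \<Rightarrow> 'a) \<Rightarrow> nat \<Rightarrow> complex \<Rightarrow> (nat \<Rightarrow> complex)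
     \<Rightarrow> (nat \<Rightarrow> nat) \<Rightarrow> (nat \<Rightarrow> nat) \<Rightarrow> (nat \<Rightarrow> nat \<Rightarrow> complex) \<Rightarrow> 'a" where
  "Ltil emb T m x \<Lambda> \<xi> \<zeta> t =
     emb ((\<Prod>a\<in>{1..m-2}. \<Prod>i\<in>{1..\<xi> (a+1) - \<zeta> (a+1)}. \<Prod>j\<in>{\<xi> a - \<zeta> a + 1..\<xi> a}.
             (t (a+1) i - t a j + 1) / (t (a+1) i - t a j)) *
          (\<Prod>l\<in>{1..m-1}. \<Prod>i\<in>{..<\<zeta> l}. (t l (\<xi> l - i) - x + \<Lambda> (l+1)) / (t l (\<xi> l - i) - x)))
     * Bethe emb T m (\<lambda>a. \<xi> a - \<zeta> a) t"

text \<open>Argument (dot t_{(xi - zeta, xi]}; check t^m) of the tilde weight function.\<close>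
definition argJ :: "nat \<Rightarrow> (nat \<Rightarrow> nat) \<Rightarrow> (nat \<Rightarrow> nat) \<Rightarrow> (nat \<Rightarrow> nat \<Rightarrow> complex) \<Rightarrow> nat \<Rightarrow> nat \<Rightarrow> complex" where
  "argJ m \<xi> \<zeta> t = (\<lambda>l a. if l = m then t m (\<xi> m + 1 - a) else t l (\<xi> l - \<zeta> l + a))"

end

theory Submission
  imports Defs
begin

lemma Bethe_cong:
  assumes "\<And>j i. 0 < i \<Longrightarrow> i \<le> \<xi> j \<Longrightarrow> t j i = t' j i"
  shows "Bethe emb T k \<xi> t = Bethe emb T k \<xi> t'"
proof -
  have 1: "TTgrp T k \<xi> t j = TTgrp T k \<xi> t' j" for j
    unfolding TTgrp_def by (intro arg_cong[where f="opprod _ _"] map_cong refl) (auto simp: assms)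
  have 2: "RRgrp emb k \<xi> t i j = RRgrp emb k \<xi> t' i j" for i j
    unfolding RRgrp_def by (intro arg_cong[where f="opprod _ _"] arg_cong[where f=concat] map_cong refl) (auto simp: assms)
  show ?thesis unfolding Bethe_def That_def 1 2 ..
qed

lemma emb_0: assumes "alg_emb emb" shows "emb 0 = 0"
proof -
  have "emb (0+0) = emb 0 + emb 0" using assms unfolding alg_emb_def by blast
  then show ?thesis by simp
qed

lemma emb_sum: assumes "alg_emb emb" shows "emb (\<Sum>x\<in>A. f x) = (\<Sum>x\<in>A. emb (f x))"
proof (induction A rule: infinite_finite_induct)
  case (infinite A) then show ?case using emb_0[OF assms] by simp
next
  case empty then show ?case using emb_0[OF assms] by simp
next
  case (insert x F) then show ?case using assms unfolding alg_emb_def by simp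
qed

lemma emb_of_nat: assumes "alg_emb emb" shows "emb (of_nat k) = of_nat k"
  by (induction k) (use assms emb_0[OF assms] in \<open>auto simp: alg_emb_def\<close>)

lemma emb_mult: assumes "alg_emb emb" shows "emb (a * b) = emb a * emb b"
  using assms unfolding alg_emb_def by blast

lemma prod_perm: "p permutes S \<Longrightarrow> (\<Prod>i\<in>S. g (p i)) = (\<Prod>i\<in>S. (g i :: 'b::comm_monoid_mult))"
  using prod.permute[of p S g] by (simp add: comp_def)

lemma perm_fams_perm: "\<sigma> \<in> perm_fams G sz \<Longrightarrow> \<sigma> a permutes {1..sz a}"
  unfolding perm_fams_def by (cases "a \<in> G") auto

lemma perm_fams_shift:
  assumes h: "h \<in> perm_fams G sz"
  shows "(\<Sum>\<sigma>\<in>perm_fams G sz. F (\<lambda>a. \<sigma> a \<circ> h a)) = (\<Sum>\<sigma>\<in>perm_fams G sz. F \<sigma>)"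
proof (rule sum.reindex_bij_witness[where i="\<lambda>\<sigma> a. \<sigma> a \<circ> inv (h a)" and j="\<lambda>\<sigma> a. \<sigma> a \<circ> h a"])
  have hp: "\<And>a. h a permutes {1..sz a}" using perm_fams_perm[OF h] .
  show "\<And>\<sigma>. \<sigma> \<in> perm_fams G sz \<Longrightarrow> (\<lambda>a. (\<sigma> a \<circ> h a) \<circ> inv (h a)) = \<sigma>"
    using hp permutes_inv_o[OF hp] by (simp add: o_assoc[symmetric])
  show "\<And>\<sigma>. \<sigma> \<in> perm_fams G sz \<Longrightarrow> (\<lambda>a. (\<sigma> a \<circ> inv (h a)) \<circ> h a) = \<sigma>"
    using hp permutes_inv_o[OF hp] by (simp add: o_assoc[symmetric])
  show "\<And>\<sigma>. \<sigma> \<in> perm_fams G sz \<Longrightarrow> (\<lambda>a. \<sigma> a \<circ> h a) \<in> perm_fams G sz"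
    using h unfolding perm_fams_def by (auto intro: permutes_compose)
  show "\<And>\<sigma>. \<sigma> \<in> perm_fams G sz \<Longrightarrow> (\<lambda>a. \<sigma> a \<circ> inv (h a)) \<in> perm_fams G sz"
    using h unfolding perm_fams_def by (auto intro: permutes_compose permutes_inv)
qed simp

lemma card_perm_fams:
  assumes "finite G"
  shows "card (perm_fams G sz) = (\<Prod>a\<in>G. fact (sz a))" "finite (perm_fams G sz)"
proof -
  have b: "bij_betw (\<lambda>\<sigma>. restrict \<sigma> G) (perm_fams G sz) (Pi\<^sub>E G (\<lambda>a. {p. p permutes {1..sz a}}))"
  proof (rule bij_betw_byWitness[where f'="\<lambda>f a. if a \<in> G then f a else id"])
    show "\<forall>a\<in>perm_fams G sz. (\<lambda>a'. if a' \<in> G then restrict a G a' else id) = a"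
      unfolding perm_fams_def by auto
    show "\<forall>a'\<in>Pi\<^sub>E G (\<lambda>a. {p. p permutes {1..sz a}}). restrict (\<lambda>a. if a \<in> G then a' a else id) G = a'"
      by (auto simp: PiE_def extensional_def)
    show "(\<lambda>\<sigma>. restrict \<sigma> G) ` perm_fams G sz \<subseteq> Pi\<^sub>E G (\<lambda>a. {p. p permutes {1..sz a}})"
      unfolding perm_fams_def by auto
    show "(\<lambda>f a. if a \<in> G then f a else id) ` Pi\<^sub>E G (\<lambda>a. {p. p permutes {1..sz a}}) \<subseteq> perm_fams G sz"
      unfolding perm_fams_def by auto
  qed
  have "card (Pi\<^sub>E G (\<lambda>a. {p. p permutes {1..sz a}})) = (\<Prod>a\<in>G. fact (sz a))"
    using assms by (simp add: card_PiE card_permutations)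
  then show "card (perm_fams G sz) = (\<Prod>a\<in>G. fact (sz a))" using bij_betw_same_card[OF b] by simp
  have "finite (Pi\<^sub>E G (\<lambda>a. {p. p permutes {1..sz a}}))"
    using assms by (intro finite_PiE) (auto simp: finite_permutations)
  then show "finite (perm_fams G sz)" using bij_betw_finite[OF b] by simp
qed

lemma sym_avg:
  fixes emb :: "complex \<Rightarrow> 'a::ring_1"
  assumes emb: "alg_emb emb"
    and hK: "\<And>k. k \<in> K \<Longrightarrow> \<phi> k \<in> perm_fams G sz"
    and hW: "\<And>s. W s = (\<Sum>k\<in>K. V (\<lambda>a i. s a (\<phi> k a i)))"
    and hL: "\<And>s k. k \<in> K \<Longrightarrow> L (\<lambda>a i. s a (\<phi> k a i)) = L s"
    and hc: "c * of_nat (card K) = 1"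
  shows "SymG G sz (\<lambda>s. emb (V s) * L s) t = emb c * SymG G sz (\<lambda>s. emb (W s) * L s) t"
proof -
  define F where "F \<sigma> = emb (V (\<lambda>a i. t a (\<sigma> a i))) * L (\<lambda>a i. t a (\<sigma> a i))" for \<sigma>
  have "SymG G sz (\<lambda>s. emb (W s) * L s) t
      = (\<Sum>\<sigma>\<in>perm_fams G sz. \<Sum>k\<in>K. F (\<lambda>a. \<sigma> a \<circ> \<phi> k a))"
    unfolding SymG_def hW emb_sum[OF emb] sum_distrib_right F_def
    apply (intro sum.cong refl)
    subgoal for \<sigma> k using hL[of k "\<lambda>a i. t a (\<sigma> a i)"] by simp
    done
  also have "\<dots> = (\<Sum>k\<in>K. \<Sum>\<sigma>\<in>perm_fams G sz. F (\<lambda>a. \<sigma> a \<circ> \<phi> k a))"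
    by (rule sum.swap)
  also have "\<dots> = (\<Sum>k\<in>K. \<Sum>\<sigma>\<in>perm_fams G sz. F \<sigma>)"
    by (intro sum.cong refl perm_fams_shift hK)
  also have "\<dots> = of_nat (card K) * SymG G sz (\<lambda>s. emb (V s) * L s) t"
    by (simp add: SymG_def F_def)
  finally have "emb c * SymG G sz (\<lambda>s. emb (W s) * L s) t
     = emb c * emb (of_nat (card K)) * SymG G sz (\<lambda>s. emb (V s) * L s) t"
    by (simp add: emb_of_nat[OF emb] mult.assoc)
  also have "emb c * emb (of_nat (card K)) = 1"
    using emb hc unfolding alg_emb_def by metis
  finally show ?thesis by simp
qed

lemma Lfun_inv:
  assumes "\<tau> \<in> perm_fams G \<eta>"
  shows "Lfun emb T n m x \<Lambda> \<xi> \<eta> (\<lambda>a i. s a (\<tau> a i)) = Lfun emb T n m x \<Lambda> \<xi> \<eta> s"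
proof -
  have hp: "\<And>a. \<tau> a permutes {1..\<eta> a}" using perm_fams_perm[OF assms] .
  have fx: "\<And>a j. \<eta> a < j \<Longrightarrow> \<tau> a j = j" by (rule permutes_not_in[OF hp]) simp
  have A: "(\<Prod>i\<in>{1..\<eta> (a+1)}. \<Prod>j\<in>{\<eta> a + 1..\<xi> a}.
             (s (a+1) (\<tau> (a+1) i) - s a (\<tau> a j) + 1) / (s (a+1) (\<tau> (a+1) i) - s a (\<tau> a j)))
        = (\<Prod>i\<in>{1..\<eta> (a+1)}. \<Prod>j\<in>{\<eta> a + 1..\<xi> a}.
             (s (a+1) i - s a j + 1) / (s (a+1) i - s a j))" for a
  proof -
    have "(\<Prod>i\<in>{1..\<eta> (a+1)}. \<Prod>j\<in>{\<eta> a + 1..\<xi> a}.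
             (s (a+1) (\<tau> (a+1) i) - s a (\<tau> a j) + 1) / (s (a+1) (\<tau> (a+1) i) - s a (\<tau> a j)))
        = (\<Prod>i\<in>{1..\<eta> (a+1)}. (\<lambda>i. \<Prod>j\<in>{\<eta> a + 1..\<xi> a}.
             (s (a+1) i - s a j + 1) / (s (a+1) i - s a j)) (\<tau> (a+1) i))"
      by (intro prod.cong refl) (simp add: fx)
    also have "\<dots> = (\<Prod>i\<in>{1..\<eta> (a+1)}. (\<lambda>i. \<Prod>j\<in>{\<eta> a + 1..\<xi> a}.
             (s (a+1) i - s a j + 1) / (s (a+1) i - s a j)) i)"
      by (rule prod_perm[OF hp])
    finally show ?thesis by simp
  qed
  have B: "(\<Prod>i\<in>{1..\<eta> l}. (s l (\<tau> l i) - x + \<Lambda> l) / (s l (\<tau> l i) - x))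
         = (\<Prod>i\<in>{1..\<eta> l}. (s l i - x + \<Lambda> l) / (s l i - x))" for l
    using prod_perm[OF hp, of "\<lambda>i. (s l i - x + \<Lambda> l) / (s l i - x)" l] by simp
  have C: "Bethe emb (\<lambda>a b. T (a + m) (b + m)) (n - m) (\<lambda>a. \<xi> (a + m) - \<eta> (a + m))
             (\<lambda>a i. s (a + m) (\<tau> (a + m) (\<eta> (a + m) + i)))
         = Bethe emb (\<lambda>a b. T (a + m) (b + m)) (n - m) (\<lambda>a. \<xi> (a + m) - \<eta> (a + m))
             (\<lambda>a i. s (a + m) (\<eta> (a + m) + i))"
    by (rule Bethe_cong) (simp add: fx)
  show ?thesis unfolding Lfun_def A B C ..
qed

lemma shift_permutes:
  fixes c z :: nat
  assumes p: "p permutes {1..z}"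
  shows "(\<lambda>j. if c < j \<and> j \<le> c + z then c + p (j - c) else j) permutes {c+1..c+z}"
proof (rule bij_imp_permutes)
  have im: "\<And>y. y \<in> {1..z} \<Longrightarrow> p y \<in> {1..z}" using permutes_in_image[OF p] by simp
  have im2: "\<And>y. y \<in> {1..z} \<Longrightarrow> inv p y \<in> {1..z}" using permutes_in_image[OF permutes_inv[OF p]] by simp
  have iv: "\<And>y. inv p (p y) = y" "\<And>y. p (inv p y) = y" using permutes_inverses[OF p] by auto
  show "bij_betw (\<lambda>j. if c < j \<and> j \<le> c + z then c + p (j - c) else j) {c+1..c+z} {c+1..c+z}"
  proof (rule bij_betw_byWitness[where f'="\<lambda>j. if c < j \<and> j \<le> c + z then c + inv p (j - c) else j"])
    show "\<forall>a\<in>{c + 1..c + z}. (if c < (if c < a \<and> a \<le> c + z then c + p (a - c) else a) \<and>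
         (if c < a \<and> a \<le> c + z then c + p (a - c) else a) \<le> c + z
       then c + inv p ((if c < a \<and> a \<le> c + z then c + p (a - c) else a) - c)
       else (if c < a \<and> a \<le> c + z then c + p (a - c) else a)) = a"
    proof
      fix a assume a: "a \<in> {c + 1..c + z}"
      then have "p (a - c) \<in> {1..z}" by (intro im) auto
      with a show "(if c < (if c < a \<and> a \<le> c + z then c + p (a - c) else a) \<and>
         (if c < a \<and> a \<le> c + z then c + p (a - c) else a) \<le> c + z
       then c + inv p ((if c < a \<and> a \<le> c + z then c + p (a - c) else a) - c)
       else (if c < a \<and> a \<le> c + z then c + p (a - c) else a)) = a" by (auto simp: iv)
    qed
    show "\<forall>a\<in>{c + 1..c + z}. (if c < (if c < a \<and> a \<le> c + z then c + inv p (a - c) else a) \<and>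
         (if c < a \<and> a \<le> c + z then c + inv p (a - c) else a) \<le> c + z
       then c + p ((if c < a \<and> a \<le> c + z then c + inv p (a - c) else a) - c)
       else (if c < a \<and> a \<le> c + z then c + inv p (a - c) else a)) = a"
    proof
      fix a assume a: "a \<in> {c + 1..c + z}"
      then have "inv p (a - c) \<in> {1..z}" by (intro im2) auto
      with a show "(if c < (if c < a \<and> a \<le> c + z then c + inv p (a - c) else a) \<and>
         (if c < a \<and> a \<le> c + z then c + inv p (a - c) else a) \<le> c + z
       then c + p ((if c < a \<and> a \<le> c + z then c + inv p (a - c) else a) - c)
       else (if c < a \<and> a \<le> c + z then c + inv p (a - c) else a)) = a" by (auto simp: iv)
    qed
    show "(\<lambda>j. if c < j \<and> j \<le> c + z then c + p (j - c) else j) ` {c + 1..c + z} \<subseteq> {c + 1..c + z}"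
    proof
      fix y assume "y \<in> (\<lambda>j. if c < j \<and> j \<le> c + z then c + p (j - c) else j) ` {c + 1..c + z}"
      then obtain a where a: "a \<in> {c+1..c+z}" "y = (if c < a \<and> a \<le> c + z then c + p (a - c) else a)" by auto
      then have "p (a - c) \<in> {1..z}" by (intro im) auto
      with a show "y \<in> {c + 1..c + z}" by auto
    qed
    show "(\<lambda>j. if c < j \<and> j \<le> c + z then c + inv p (j - c) else j) ` {c + 1..c + z} \<subseteq> {c + 1..c + z}"
    proof
      fix y assume "y \<in> (\<lambda>j. if c < j \<and> j \<le> c + z then c + inv p (j - c) else j) ` {c + 1..c + z}"
      then obtain a where a: "a \<in> {c+1..c+z}" "y = (if c < a \<and> a \<le> c + z then c + inv p (a - c) else a)" by auto
      then have "inv p (a - c) \<in> {1..z}" by (intro im2) auto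
      with a show "y \<in> {c + 1..c + z}" by auto
    qed
  qed
  show "\<And>x. x \<notin> {c + 1..c + z} \<Longrightarrow> (if c < x \<and> x \<le> c + z then c + p (x - c) else x) = x" by auto
qed

lemma part1:
  fixes emb :: "complex \<Rightarrow> 'a::ring_1"
  assumes emb: "alg_emb emb"
    and le: "\<forall>s\<in>{m+1..n-1}. etaI n I s \<le> \<xi> s"
  shows "SymG {m+1..n-1} \<xi> (\<lambda>s. emb (UI n m I s) * Lfun emb T n m x \<Lambda> \<xi> (etaI n I) s) t
            = emb (\<Prod>s\<in>{m+1..n-1}. 1 / of_nat (fact (etaI n I s))) *
              SymG {m+1..n-1} \<xi> (\<lambda>s. emb (WI n m I s) * Lfun emb T n m x \<Lambda> \<xi> (etaI n I) s) t"
proof (rule sym_avg[OF emb, where K="perm_fams {m+1..n-1} (etaI n I)" and \<phi>="\<lambda>k. k"])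
  show "k \<in> perm_fams {m+1..n-1} \<xi>" if k: "k \<in> perm_fams {m+1..n-1} (etaI n I)" for k
  proof -
    have "k a permutes {1..\<xi> a}" if "a \<in> {m+1..n-1}" for a
      using permutes_subset[OF perm_fams_perm[OF k, of a]] le that by auto
    then show ?thesis using k unfolding perm_fams_def by auto
  qed
  show "\<And>s. WI n m I s = (\<Sum>k\<in>perm_fams {m+1..n-1} (etaI n I). UI n m I (\<lambda>a i. s a (k a i)))"
    unfolding WI_def SymG_def ..
  show "\<And>s k. k \<in> perm_fams {m+1..n-1} (etaI n I) \<Longrightarrow>
      Lfun emb T n m x \<Lambda> \<xi> (etaI n I) (\<lambda>a i. s a (k a i)) = Lfun emb T n m x \<Lambda> \<xi> (etaI n I) s"
    by (rule Lfun_inv)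
  show "(\<Prod>s\<in>{m+1..n-1}. 1 / of_nat (fact (etaI n I s))) * of_nat (card (perm_fams {m+1..n-1} (etaI n I))) = (1::complex)"
    by (simp add: card_perm_fams prod.distrib[symmetric])
qed

lemma prod_rev_reindex:
  fixes z xi :: nat
  assumes "z \<le> xi"
  shows "(\<Prod>i\<in>{..<z}. F (xi - i)) = (\<Prod>j\<in>{xi-z+1..xi}. (F j :: 'b::comm_monoid_mult))"
  by (rule prod.reindex_bij_witness[where i="\<lambda>k. xi - k" and j="\<lambda>k. xi - k"]) (use assms in auto)

lemma Ltil_inv:
  assumes P1: "\<And>a. h a permutes {\<xi> a - \<zeta> a + 1..\<xi> a}"
    and P2: "\<And>a j. j \<le> \<xi> a - \<zeta> a \<Longrightarrow> h a j = j"
    and le: "\<forall>a\<in>{1..m-1}. \<zeta> a \<le> \<xi> a"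
  shows "Ltil emb T m x \<Lambda> \<xi> \<zeta> (\<lambda>a i. s a (h a i)) = Ltil emb T m x \<Lambda> \<xi> \<zeta> s"
proof -
  have A: "(\<Prod>i\<in>{1..\<xi> (a+1) - \<zeta> (a+1)}. \<Prod>j\<in>{\<xi> a - \<zeta> a + 1..\<xi> a}.
             (s (a+1) (h (a+1) i) - s a (h a j) + 1) / (s (a+1) (h (a+1) i) - s a (h a j)))
        = (\<Prod>i\<in>{1..\<xi> (a+1) - \<zeta> (a+1)}. \<Prod>j\<in>{\<xi> a - \<zeta> a + 1..\<xi> a}.
             (s (a+1) i - s a j + 1) / (s (a+1) i - s a j))" for a
  proof (rule prod.cong[OF refl])
    fix i assume "i \<in> {1..\<xi> (a+1) - \<zeta> (a+1)}"
    then have hi: "h (a+1) i = i" by (intro P2) auto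
    show "(\<Prod>j\<in>{\<xi> a - \<zeta> a + 1..\<xi> a}.
             (s (a+1) (h (a+1) i) - s a (h a j) + 1) / (s (a+1) (h (a+1) i) - s a (h a j)))
       = (\<Prod>j\<in>{\<xi> a - \<zeta> a + 1..\<xi> a}. (s (a+1) i - s a j + 1) / (s (a+1) i - s a j))"
      unfolding hi using prod_perm[OF P1, of "\<lambda>j. (s (a+1) i - s a j + 1) / (s (a+1) i - s a j)" a] by simp
  qed
  have B: "(\<Prod>l\<in>{1..m-1}. \<Prod>i\<in>{..<\<zeta> l}. (s l (h l (\<xi> l - i)) - x + \<Lambda> (l+1)) / (s l (h l (\<xi> l - i)) - x))
         = (\<Prod>l\<in>{1..m-1}. \<Prod>i\<in>{..<\<zeta> l}. (s l (\<xi> l - i) - x + \<Lambda> (l+1)) / (s l (\<xi> l - i) - x))"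
  proof (rule prod.cong[OF refl])
    fix l assume l: "l \<in> {1..m-1}"
    then have z: "\<zeta> l \<le> \<xi> l" using le by auto
    show "(\<Prod>i\<in>{..<\<zeta> l}. (s l (h l (\<xi> l - i)) - x + \<Lambda> (l+1)) / (s l (h l (\<xi> l - i)) - x))
        = (\<Prod>i\<in>{..<\<zeta> l}. (s l (\<xi> l - i) - x + \<Lambda> (l+1)) / (s l (\<xi> l - i) - x))"
      using prod_rev_reindex[OF z, of "\<lambda>j. (s l (h l j) - x + \<Lambda> (l+1)) / (s l (h l j) - x)"]
        prod_rev_reindex[OF z, of "\<lambda>j. (s l j - x + \<Lambda> (l+1)) / (s l j - x)"]
        prod_perm[OF P1, of "\<lambda>j. (s l j - x + \<Lambda> (l+1)) / (s l j - x)" l] by simp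
  qed
  have C: "Bethe emb T m (\<lambda>a. \<xi> a - \<zeta> a) (\<lambda>a i. s a (h a i)) = Bethe emb T m (\<lambda>a. \<xi> a - \<zeta> a) s"
    by (rule Bethe_cong) (simp add: P2)
  show ?thesis unfolding Ltil_def A B C ..
qed

lemma part2:
  fixes emb :: "complex \<Rightarrow> 'a::ring_1"
  assumes emb: "alg_emb emb" and m: "1 \<le> m"
    and le: "\<forall>s\<in>{1..m-1}. zetaJ J s \<le> \<xi> s"
  shows "SymG {1..m-1} \<xi> (\<lambda>s. emb (UJ m J (argJ m \<xi> (zetaJ J) s)) * Ltil emb T m x \<Lambda> \<xi> (zetaJ J) s) t
            = emb (\<Prod>s\<in>{1..m-1}. 1 / of_nat (fact (zetaJ J s))) *
              SymG {1..m-1} \<xi> (\<lambda>s. emb (WJ m J (argJ m \<xi> (zetaJ J) s)) * Ltil emb T m x \<Lambda> \<xi> (zetaJ J) s) t"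
proof -
  define \<zeta> where "\<zeta> = zetaJ J"
  define G where "G = {1..m-1}"
  define \<phi> where "\<phi> \<tau> = (\<lambda>a j. if a \<in> G \<and> \<xi> a - \<zeta> a < j \<and> j \<le> \<xi> a
      then \<xi> a - \<zeta> a + (\<tau> a (j - (\<xi> a - \<zeta> a)) :: nat) else j)" for \<tau>
  have le': "\<And>a. a \<in> G \<Longrightarrow> \<zeta> a \<le> \<xi> a" using le unfolding G_def \<zeta>_def by auto
  have P1: "\<phi> \<tau> a permutes {\<xi> a - \<zeta> a + 1..\<xi> a}" if \<tau>: "\<tau> \<in> perm_fams G \<zeta>" for \<tau> a
  proof (cases "a \<in> G")
    case True
    have sp: "(\<lambda>j. if \<xi> a - \<zeta> a < j \<and> j \<le> \<xi> a - \<zeta> a + \<zeta> a then \<xi> a - \<zeta> a + \<tau> a (j - (\<xi> a - \<zeta> a)) else j)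
        permutes {\<xi> a - \<zeta> a + 1..\<xi> a - \<zeta> a + \<zeta> a}"
      by (rule shift_permutes[OF perm_fams_perm[OF \<tau>]])
    have e: "\<xi> a - \<zeta> a + \<zeta> a = \<xi> a" using le'[OF True] by simp
    show ?thesis using sp unfolding e \<phi>_def using True by simp
  next
    case False
    then have "\<phi> \<tau> a = id" unfolding \<phi>_def by (auto simp: fun_eq_iff)
    then show ?thesis by simp
  qed
  have P2: "\<And>\<tau> a j. j \<le> \<xi> a - \<zeta> a \<Longrightarrow> \<phi> \<tau> a j = j" unfolding \<phi>_def by auto
  have P3: "\<phi> \<tau> \<in> perm_fams G \<xi>" if \<tau>: "\<tau> \<in> perm_fams G \<zeta>" for \<tau>
  proof -
    have "\<phi> \<tau> a permutes {1..\<xi> a}" if "a \<in> G" for a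
      by (rule permutes_subset[OF P1[OF \<tau>]]) auto
    moreover have "\<phi> \<tau> a = id" if "a \<notin> G" for a
      using that unfolding \<phi>_def by (auto simp: fun_eq_iff)
    ultimately show ?thesis unfolding perm_fams_def by auto
  qed
  have P4: "argJ m \<xi> \<zeta> (\<lambda>a i. s a (\<phi> \<tau> a i)) = (\<lambda>a i. argJ m \<xi> \<zeta> s a (\<tau> a i))"
    if \<tau>: "\<tau> \<in> perm_fams G \<zeta>" for \<tau> s
  proof (intro ext)
    fix l a'
    have tp: "\<tau> l permutes {1..\<zeta> l}" using perm_fams_perm[OF \<tau>] .
    show "argJ m \<xi> \<zeta> (\<lambda>a i. s a (\<phi> \<tau> a i)) l a' = argJ m \<xi> \<zeta> s l (\<tau> l a')"
    proof (cases "l \<in> G")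
      case True
      then have lm: "l \<noteq> m" unfolding G_def by auto
      have z: "\<zeta> l \<le> \<xi> l" using le'[OF True] .
      show ?thesis
      proof (cases "1 \<le> a' \<and> a' \<le> \<zeta> l")
        case True
        with z \<open>l \<in> G\<close> lm show ?thesis unfolding argJ_def \<phi>_def by auto
      next
        case False
        then have "\<tau> l a' = a'" using permutes_not_in[OF tp] by auto
        with False z \<open>l \<in> G\<close> lm show ?thesis unfolding argJ_def \<phi>_def by auto
      qed
    next
      case False
      then have "\<tau> l = id" using \<tau> unfolding perm_fams_def by auto
      with False show ?thesis unfolding argJ_def \<phi>_def by auto
    qed
  qed
  show ?thesis unfolding \<zeta>_def[symmetric] G_def[symmetric]
  proof (rule sym_avg[OF emb, where K="perm_fams G \<zeta>" and \<phi>=\<phi>])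
    show "\<And>k. k \<in> perm_fams G \<zeta> \<Longrightarrow> \<phi> k \<in> perm_fams G \<xi>" by (rule P3)
    show "\<And>s. WJ m J (argJ m \<xi> \<zeta> s) = (\<Sum>k\<in>perm_fams G \<zeta>. UJ m J (argJ m \<xi> \<zeta> (\<lambda>a i. s a (\<phi> k a i))))"
      unfolding WJ_def SymG_def \<zeta>_def[symmetric] G_def[symmetric] by (intro sum.cong refl) (simp add: P4)
    show "\<And>s k. k \<in> perm_fams G \<zeta> \<Longrightarrow>
      Ltil emb T m x \<Lambda> \<xi> \<zeta> (\<lambda>a i. s a (\<phi> k a i)) = Ltil emb T m x \<Lambda> \<xi> \<zeta> s"
      by (rule Ltil_inv[OF P1 P2]) (use le' G_def in auto)
    show "(\<Prod>s\<in>G. 1 / of_nat (fact (\<zeta> s))) * of_nat (card (perm_fams G \<zeta>)) = (1::complex)"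
      by (simp add: card_perm_fams prod.distrib[symmetric] G_def)
  qed
qed

theorem lemma6p2:
  fixes emb :: "complex \<Rightarrow> 'a::ring_1"
    and T :: "nat \<Rightarrow> nat \<Rightarrow> complex \<Rightarrow> 'a"
    and n m :: nat and \<xi> :: "nat \<Rightarrow> nat"
    and x :: complex and \<Lambda> :: "nat \<Rightarrow> complex"
    and t :: "nat \<Rightarrow> nat \<Rightarrow> complex"
  assumes "alg_emb emb" and "yangian_rel emb n T"
    and "1 \<le> m" and "m < n"
  shows "(\<forall>I. is_partition {m+1..n} I (\<xi> m) \<and> (\<forall>s\<in>{m+1..n-1}. etaI n I s \<le> \<xi> s) \<longrightarrow>
            SymG {m+1..n-1} \<xi> (\<lambda>s. emb (UI n m I s) * Lfun emb T n m x \<Lambda> \<xi> (etaI n I) s) t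
            = emb (\<Prod>s\<in>{m+1..n-1}. 1 / of_nat (fact (etaI n I s))) *
              SymG {m+1..n-1} \<xi> (\<lambda>s. emb (WI n m I s) * Lfun emb T n m x \<Lambda> \<xi> (etaI n I) s) t)
       \<and> (\<forall>J. is_partition {1..m} J (\<xi> m) \<and> (\<forall>s\<in>{1..m-1}. zetaJ J s \<le> \<xi> s) \<longrightarrow>
            SymG {1..m-1} \<xi> (\<lambda>s. emb (UJ m J (argJ m \<xi> (zetaJ J) s)) * Ltil emb T m x \<Lambda> \<xi> (zetaJ J) s) t
            = emb (\<Prod>s\<in>{1..m-1}. 1 / of_nat (fact (zetaJ J s))) *
              SymG {1..m-1} \<xi> (\<lambda>s. emb (WJ m J (argJ m \<xi> (zetaJ J) s)) * Ltil emb T m x \<Lambda> \<xi> (zetaJ J) s) t)"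
proof (intro conjI allI impI)
  fix I assume h: "is_partition {m+1..n} I (\<xi> m) \<and> (\<forall>s\<in>{m+1..n-1}. etaI n I s \<le> \<xi> s)"
  show "SymG {m+1..n-1} \<xi> (\<lambda>s. emb (UI n m I s) * Lfun emb T n m x \<Lambda> \<xi> (etaI n I) s) t
            = emb (\<Prod>s\<in>{m+1..n-1}. 1 / of_nat (fact (etaI n I s))) *
              SymG {m+1..n-1} \<xi> (\<lambda>s. emb (WI n m I s) * Lfun emb T n m x \<Lambda> \<xi> (etaI n I) s) t"
    using part1[OF assms(1)] h by blast
next
  fix J assume h: "is_partition {1..m} J (\<xi> m) \<and> (\<forall>s\<in>{1..m-1}. zetaJ J s \<le> \<xi> s)"
  show "SymG {1..m-1} \<xi> (\<lambda>s. emb (UJ m J (argJ m \<xi> (zetaJ J) s)) * Ltil emb T m x \<Lambda> \<xi> (zetaJ J) s) t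
            = emb (\<Prod>s\<in>{1..m-1}. 1 / of_nat (fact (zetaJ J s))) *
              SymG {1..m-1} \<xi> (\<lambda>s. emb (WJ m J (argJ m \<xi> (zetaJ J) s)) * Ltil emb T m x \<Lambda> \<xi> (zetaJ J) s) t"
    using part2[OF assms(1) assms(3)] h by blast
qed

end
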